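(* Let $q$ be a prime with $q\equiv 3 \pmod 4$. Let $x^1,y^1,x^2,y^2 \in \mathbb{F}_q^2$ with $\|x^1-y^1\| = \|x^2-y^2\|$ and $x^1-y^1 \ne x^2-y^2$. Then there exists a unique pair $(p,\theta)$ with $p \in \mathbb{F}_q^2$ and $\theta \in SO(2,q)\setminus\{I\}$ such that $f_{p,\theta}(x^1) = x^2$ and $f_{p,\theta}(y^1)=y^2$.
   Context: $\|(a_1,a_2)\| = a_1^2+a_2^2$. $SO(2,q) = \{A \in \mathrm{Mat}_2(\mathbb{F}_q) : A^TA = I, \det A = 1\} = \left\{\begin{pmatrix} a & -b\\ b & a\end{pmatrix} : a^2+b^2=1\right\}$. For $p \in \mathbb{F}_q^2$ (column vector) and $\theta \in SO(2,q)$, $f_{p,\theta}:\mathbb{F}_q^2\to\mathbb{F}_q^2$ is $f_{p,\theta}(x) = \theta(x-p)+p$. *)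

theory Defs
  imports "HOL-Analysis.Analysis"
begin

text \<open>Vectors of F_q^2 are column vectors of type 'a ^ 2, matrices 'a ^ 2 ^ 2.\<close>

definition sqnorm :: "'a::comm_ring_1 ^ 2 \<Rightarrow> 'a" where
  "sqnorm x = (x $ 1)^2 + (x $ 2)^2"

definition SO2 :: "('a::comm_ring_1 ^ 2 ^ 2) set" where
  "SO2 = {A. transpose A ** A = mat 1 \<and> det A = 1}"

definition frot :: "'a::comm_ring_1 ^ 2 \<Rightarrow> 'a ^ 2 ^ 2 \<Rightarrow> 'a ^ 2 \<Rightarrow> 'a ^ 2" where
  "frot p \<theta> x = \<theta> *v (x - p) + p"

end

theory Submission
  imports Defs
begin
lemma char_card: "of_nat CARD('a::{field,finite}) = (0::'a)"
proof -
  have "(\<Sum>y\<in>UNIV. y + (1::'a)) = (\<Sum>y\<in>UNIV. y)"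
    by (rule sum.reindex_bij_betw) (auto simp: bij_betw_def inj_on_def intro!: image_eqI[where x="_ - 1"])
  then show ?thesis by (simp add: sum.distrib)
qed
lemma fermat_ff: fixes x :: "'a::{field,finite}" assumes "x \<noteq> 0"
  shows "x ^ (CARD('a) - 1) = 1"
proof -
  let ?S = "UNIV - {0::'a}"
  have "(\<Prod>y\<in>?S. x * y) = (\<Prod>y\<in>?S. y)"
  proof -
    have "(*) x ` ?S = ?S"
    proof
      show "?S \<subseteq> (*) x ` ?S" 
      proof
        fix y assume "y \<in> ?S"
        then have "y = x * (y / x)" "y / x \<in> ?S" using assms by auto
        then show "y \<in> (*) x ` ?S" by blast
      qed
    qed (use assms in auto)
    moreover have "inj_on ((*) x) ?S" using assms by (auto simp: inj_on_def)
    ultimately have "bij_betw ((*) x) ?S ?S" by (simp add: bij_betw_def)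
    from prod.reindex_bij_betw[OF this, of "\<lambda>y. y"] show ?thesis by simp
  qed
  moreover have "(\<Prod>y\<in>?S. x * y) = x ^ card ?S * (\<Prod>y\<in>?S. y)"
    by (simp add: prod.distrib)
  moreover have "(\<Prod>y\<in>?S. y) \<noteq> 0" by simp
  moreover have "card ?S = CARD('a) - 1" by (simp add: card_Diff_singleton)
  ultimately show ?thesis by simp
qed
lemma nonsq: fixes i :: "'a::{field,finite}" assumes "CARD('a) mod 4 = 3" shows "i^2 \<noteq> -1"
proof
  assume h: "i^2 = -1"
  then have "i \<noteq> 0" by auto
  obtain k where k: "CARD('a) = 4*k+3" using assms by (metis mod_div_mult_eq add.commute mult.commute)
  have "1 = i ^ (CARD('a) - 1)" using fermat_ff[OF \<open>i\<noteq>0\<close>] by simp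
  also have "\<dots> = (i^2)^(2*k+1)" proof -
    have "CARD('a) - 1 = 2*(2*k+1)" using k by simp
    then show ?thesis by (simp only: power_mult)
  qed
  finally have "1 = (-1::'a)" using h by simp
  then have two: "(2::'a) = 0" by (metis add_eq_0_iff one_add_one)
  have "(0::'a) = of_nat (4*k+3)" using char_card k by metis
  also have "\<dots> = 2 * (2 * of_nat k + 1) + 1" by simp
  finally show False using two by simp
qed
lemma sumsq0: fixes a b :: "'a::{field,finite}" assumes "CARD('a) mod 4 = 3" "a^2+b^2 = 0"
  shows "a = 0 \<and> b = 0"
proof (cases "b = 0")
  case True then show ?thesis using assms by simp
next
  case False
  have "(a/b)^2 = -1" using assms(2) False by (simp add: power_divide field_simps eq_neg_iff_add_eq_0)
  then show ?thesis using nonsq[OF assms(1)] by blast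
qed
lemma divh: fixes X :: "'a::field" shows "(X/N) * a - (Y/N) * b = (X * a - Y * b)/N"
  "(X/N) * a + (Y/N) * b = (X * a + Y * b)/N" "(X/N)^2 + (Y/N)^2 = (X^2+Y^2)/N^2"
  by (simp_all add: diff_divide_distrib add_divide_distrib power_divide)
lemma rotA: fixes u1 :: "'a::field" assumes N0: "u1^2+u2^2 \<noteq> 0"
  shows "((u1 * w1 + u2 * w2)/(u1^2+u2^2)) * u1 - ((u1 * w2 - u2 * w1)/(u1^2+u2^2)) * u2 = w1"
    "((u1 * w2 - u2 * w1)/(u1^2+u2^2)) * u1 + ((u1 * w1 + u2 * w2)/(u1^2+u2^2)) * u2 = w2"
proof -
  let ?N = "u1^2+u2^2"
  have "((u1 * w1 + u2 * w2)/?N) * u1 - ((u1 * w2 - u2 * w1)/?N) * u2 = ((u1 * w1 + u2 * w2) * u1 - (u1 * w2 - u2 * w1) * u2)/?N"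
    by (rule divh)
  also have "(u1 * w1 + u2 * w2) * u1 - (u1 * w2 - u2 * w1) * u2 = w1  *  ?N" by (simp add: algebra_simps power2_eq_square)
  finally show "((u1 * w1 + u2 * w2)/?N) * u1 - ((u1 * w2 - u2 * w1)/?N) * u2 = w1" using N0 by simp
  have "((u1 * w2 - u2 * w1)/?N) * u1 + ((u1 * w1 + u2 * w2)/?N) * u2 = ((u1 * w2 - u2 * w1) * u1 + (u1 * w1 + u2 * w2) * u2)/?N"
    by (rule divh)
  also have "(u1 * w2 - u2 * w1) * u1 + (u1 * w1 + u2 * w2) * u2 = w2  *  ?N" by (simp add: algebra_simps power2_eq_square)
  finally show "((u1 * w2 - u2 * w1)/?N) * u1 + ((u1 * w1 + u2 * w2)/?N) * u2 = w2" using N0 by simp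
qed
lemma abA: fixes u1 :: "'a::field" assumes N0: "u1^2+u2^2 \<noteq> 0" and NN: "w1^2+w2^2 = u1^2+u2^2"
  shows "((u1 * w1 + u2 * w2)/(u1^2+u2^2))^2 + ((u1 * w2 - u2 * w1)/(u1^2+u2^2))^2 = 1"
proof -
  let ?N = "u1^2+u2^2"
  have "(u1 * w1 + u2 * w2)^2 + (u1 * w2 - u2 * w1)^2 = ?N  *  (w1^2+w2^2)"
    by (simp add: power2_eq_square algebra_simps)
  also have "\<dots> = ?N^2" using NN by (simp add: power2_eq_square)
  finally have e: "(u1 * w1 + u2 * w2)^2 + (u1 * w2 - u2 * w1)^2 = ?N^2" .
  have "((u1 * w1 + u2 * w2)/?N)^2 + ((u1 * w2 - u2 * w1)/?N)^2 = ((u1 * w1 + u2 * w2)^2 + (u1 * w2 - u2 * w1)^2)/?N^2"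
    by (rule divh)
  also have "\<dots> = 1" using e N0 by simp
  finally show ?thesis .
qed
lemma solveA: fixes al :: "'a::field" assumes D0: "al^2 + be^2 \<noteq> 0"
  shows "al * ((al * c1 - be * c2)/(al^2+be^2)) + be * ((be * c1 + al * c2)/(al^2+be^2)) = c1"
    "- be * ((al * c1 - be * c2)/(al^2+be^2)) + al * ((be * c1 + al * c2)/(al^2+be^2)) = c2"
proof -
  let ?D = "al^2+be^2"
  have h1: "al * (X/?D) + be * (Y/?D) = (al * X + be * Y)/?D" for X Y by (simp add: add_divide_distrib diff_divide_distrib)
  have h2: "- be * (X/?D) + al * (Y/?D) = (- be * X + al * Y)/?D" for X Y by (simp add: add_divide_distrib diff_divide_distrib)
  have "al * (al * c1 - be * c2) + be * (be * c1 + al * c2) = c1 * ?D" by (simp add: algebra_simps power2_eq_square)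
  then show "al * ((al * c1 - be * c2)/?D) + be * ((be * c1 + al * c2)/?D) = c1" unfolding h1 using D0 by simp
  have "- be * (al * c1 - be * c2) + al * (be * c1 + al * c2) = c2 * ?D" by (simp add: algebra_simps power2_eq_square)
  then show "- be * ((al * c1 - be * c2)/?D) + al * ((be * c1 + al * c2)/?D) = c2" unfolding h2 using D0 by simp
qed
definition M :: "'a::comm_ring_1 \<Rightarrow> 'a \<Rightarrow> 'a^2^2" where
 "M a b = (\<chi> i j. if i = 1 then (if j = 1 then a else - b) else (if j = 1 then b else a))"

lemma frot_M: "frot p (M a b) x $ 1 = a*(x$1-p$1) - b*(x$2-p$2) + p$1"
  "frot p (M a b) x $ 2 = b*(x$1-p$1) + a*(x$2-p$2) + p$2"
  by (simp_all add: frot_def M_def matrix_vector_mult_def sum_2)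

lemma M_eq: "M a b = M c d \<longleftrightarrow> a = c \<and> b = d"
  by (auto simp: M_def vec_eq_iff forall_2)

lemma M_one: "mat 1 = M 1 0"
  by (simp add: M_def mat_def vec_eq_iff forall_2)

lemma SO2_iff: "A \<in> SO2 \<longleftrightarrow> (\<exists>a b. A = M a b \<and> a^2+b^2 = 1)"
proof
  assume "A \<in> SO2"
  then have h: "transpose A ** A = mat 1" "det A = 1" by (auto simp: SO2_def)
  define a where "a = A$1$1"
  define b where "b = A$2$1"
  define c where "c = A$1$2"
  define d where "d = A$2$2"
  have e1: "a*a+b*b = 1" using arg_cong[OF h(1), of "\<lambda>X. X$1$1"]
    by (simp add: matrix_matrix_mult_def transpose_def mat_def sum_2 a_def b_def)
  have e2: "a*c+b*d = 0" using arg_cong[OF h(1), of "\<lambda>X. X$1$2"]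
    by (simp add: matrix_matrix_mult_def transpose_def mat_def sum_2 a_def b_def c_def d_def)
  have e3: "a*d - c*b = 1" using h(2) by (simp add: det_2 a_def b_def c_def d_def)
  have "d = a" 
  proof -
    have "d = d*(a*a+b*b)" using e1 by simp
    also have "\<dots> = a*(a*d - c*b) + b*(a*c+b*d)" by (simp add: algebra_simps)
    finally show ?thesis using e2 e3 by simp
  qed
  moreover have "c = -b"
  proof -
    have "c = c*(a*a+b*b)" using e1 by simp
    also have "\<dots> = a*(a*c+b*d) - b*(a*d - c*b)" by (simp add: algebra_simps)
    finally show ?thesis using e2 e3 by simp
  qed
  ultimately have "A = M a b"
    unfolding M_def by (simp add: vec_eq_iff forall_2 a_def b_def c_def d_def)
  then show "\<exists>a b. A = M a b \<and> a^2+b^2 = 1" using e1 by (auto simp: power2_eq_square)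
next
  assume "\<exists>a b. A = M a b \<and> a^2+b^2 = 1"
  then obtain a b where "A = M a b" "a^2+b^2=1" by auto
  then show "A \<in> SO2"
    by (simp add: SO2_def M_def det_2 vec_eq_iff forall_2 matrix_matrix_mult_def transpose_def mat_def sum_2 power2_eq_square algebra_simps)
qed

lemma lin0: fixes u1 :: "'a::field"
  assumes "\<alpha>*u1 - \<beta>*u2 = 0" "\<beta>*u1 + \<alpha>*u2 = 0" "u1^2+u2^2 \<noteq> 0"
  shows "\<alpha> = 0 \<and> \<beta> = 0"
proof -
  have "\<alpha>*(u1^2+u2^2) = u1*(\<alpha>*u1 - \<beta>*u2) + u2*(\<beta>*u1 + \<alpha>*u2)"
    by (simp add: algebra_simps power2_eq_square)
  moreover have "\<beta>*(u1^2+u2^2) = u1*(\<beta>*u1 + \<alpha>*u2) - u2*(\<alpha>*u1 - \<beta>*u2)"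
    by (simp add: algebra_simps power2_eq_square)
  ultimately have "\<alpha>*(u1^2+u2^2) = 0" "\<beta>*(u1^2+u2^2) = 0" using assms(1,2) by simp_all
  then show ?thesis using assms(3) by simp
qed

lemma vec2_eq: "(x::'a^2) = y \<longleftrightarrow> x$1 = y$1 \<and> x$2 = y$2"
  by (simp add: vec_eq_iff forall_2)

theorem lemma2p1:
  fixes x1 y1 x2 y2 :: "'a::{field,finite} ^ 2" and q :: nat
  assumes "prime q" and "CARD('a) = q" and "q mod 4 = 3"
    and "sqnorm (x1 - y1) = sqnorm (x2 - y2)"
    and "x1 - y1 \<noteq> x2 - y2"
  shows "\<exists>!z :: ('a ^ 2) \<times> ('a ^ 2 ^ 2). case z of (p, \<theta>) \<Rightarrow>
           \<theta> \<in> SO2 - {mat 1} \<and> frot p \<theta> x1 = x2 \<and> frot p \<theta> y1 = y2"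
proof -
  have C: "CARD('a) mod 4 = 3" using assms by simp
  define u1 where "u1 = x1$1 - y1$1"
  define u2 where "u2 = x1$2 - y1$2"
  define w1 where "w1 = x2$1 - y2$1"
  define w2 where "w2 = x2$2 - y2$2"
  define N where "N = u1^2 + u2^2"
  have NN: "w1^2 + w2^2 = N" using assms(4) by (simp add: sqnorm_def N_def u1_def u2_def w1_def w2_def)
  have uv: "\<not> (u1 = w1 \<and> u2 = w2)" using assms(5) by (simp add: vec2_eq u1_def u2_def w1_def w2_def)
  have N0: "N \<noteq> 0"
  proof
    assume "N = 0"
    then have "u1^2+u2^2 = 0" "w1^2+w2^2 = 0" using NN N_def by simp_all
    then have "u1 = 0 \<and> u2 = 0" "w1 = 0 \<and> w2 = 0" using sumsq0[OF C] by blast+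
    then show False using uv by simp
  qed
  define a where "a = (u1 * w1 + u2 * w2)/N"
  define b where "b = (u1 * w2 - u2 * w1)/N"
  have rot1: "a * u1 - b * u2 = w1" and rot2: "b * u1 + a * u2 = w2"
    unfolding a_def b_def N_def by (rule rotA(1)[OF N0[unfolded N_def]], rule rotA(2)[OF N0[unfolded N_def]])
  have ab1: "a^2 + b^2 = 1" using abA[OF N0[unfolded N_def] NN[unfolded N_def]] unfolding a_def b_def N_def .
  have ab_ne: "\<not> (a = 1 \<and> b = 0)"
  proof
    assume h: "a = 1 \<and> b = 0"
    then have "u1 = w1" "u2 = w2" using rot1 rot2 by simp_all
    with uv show False by simp
  qed
  define D where "D = (1-a)^2 + b^2"
  have D0: "D \<noteq> 0"
  proof
    assume "D = 0"
    then have "(1-a)^2+b^2 = 0" by (simp add: D_def)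
    from sumsq0[OF C this] have "a = 1" "b = 0" by simp_all
    with ab_ne show False by simp
  qed
  define c1 where "c1 = x2$1 - (a * x1$1 - b * x1$2)"
  define c2 where "c2 = x2$2 - (b * x1$1 + a * x1$2)"
  define p1 where "p1 = ((1-a) * c1 - b * c2)/D"
  define p2 where "p2 = (b * c1 + (1-a) * c2)/D"
  define p :: "'a^2" where "p = (\<chi> i. if i = 1 then p1 else p2)"
  have p12: "p$1 = p1" "p$2 = p2" by (simp_all add: p_def)
  have pe1: "(1-a) * p1 + b * p2 = c1" and pe2: "-b * p1 + (1-a) * p2 = c2"
    using solveA[OF D0[unfolded D_def], of c1 c2] unfolding p1_def p2_def D_def by auto
  show ?thesis
  proof (rule ex1I[of _ "(p, M a b)"])
    have "M a b \<in> SO2" using ab1 SO2_iff by blast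
    moreover have "M a b \<noteq> mat 1" using ab_ne by (simp add: M_one M_eq)
    moreover have hx: "frot p (M a b) x1 = x2"
      unfolding vec2_eq frot_M p12 using pe1 pe2
      by (simp add: c1_def c2_def algebra_simps)
    moreover have "frot p (M a b) y1 = y2"
    proof -
      have X: "a * (x1$1-p1) - b * (x1$2-p2) + p1 = x2$1" "b * (x1$1-p1) + a * (x1$2-p2) + p2 = x2$2"
        using hx unfolding vec2_eq frot_M p12 by auto
      have "a * (y1$1-p1) - b * (y1$2-p2) + p1 = (a * (x1$1-p1) - b * (x1$2-p2) + p1) - (a * u1 - b * u2)"
        by (simp add: u1_def u2_def algebra_simps)
      then have Y1: "a * (y1$1-p1) - b * (y1$2-p2) + p1 = y2$1" using X(1) rot1 by (simp add: w1_def)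
      have "b * (y1$1-p1) + a * (y1$2-p2) + p2 = (b * (x1$1-p1) + a * (x1$2-p2) + p2) - (b * u1 + a * u2)"
        by (simp add: u1_def u2_def algebra_simps)
      then have Y2: "b * (y1$1-p1) + a * (y1$2-p2) + p2 = y2$2" using X(2) rot2 by (simp add: w2_def)
      show ?thesis unfolding vec2_eq frot_M p12 using Y1 Y2 by simp
    qed
    ultimately show "case (p, M a b) of (p, \<theta>) \<Rightarrow> \<theta> \<in> SO2 - {mat 1} \<and> frot p \<theta> x1 = x2 \<and> frot p \<theta> y1 = y2"
      by simp
  next
    fix z :: "('a ^ 2) \<times> ('a ^ 2 ^ 2)"
    assume "case z of (p, \<theta>) \<Rightarrow> \<theta> \<in> SO2 - {mat 1} \<and> frot p \<theta> x1 = x2 \<and> frot p \<theta> y1 = y2"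
    then obtain p' \<theta> where z: "z = (p', \<theta>)" and th: "\<theta> \<in> SO2" "\<theta> \<noteq> mat 1"
      and f1: "frot p' \<theta> x1 = x2" and f2: "frot p' \<theta> y1 = y2" by (cases z) auto
    obtain a' b' where th': "\<theta> = M a' b'" using th SO2_iff by blast
    have f1': "a' * (x1$1-p'$1) - b' * (x1$2-p'$2) + p'$1 = x2$1" "b' * (x1$1-p'$1) + a' * (x1$2-p'$2) + p'$2 = x2$2"
      using f1 unfolding th' vec2_eq frot_M by auto
    have f2': "a' * (y1$1-p'$1) - b' * (y1$2-p'$2) + p'$1 = y2$1" "b' * (y1$1-p'$1) + a' * (y1$2-p'$2) + p'$2 = y2$2"
      using f2 unfolding th' vec2_eq frot_M by auto
    have "a' * u1 - b' * u2 = (a' * (x1$1-p'$1) - b' * (x1$2-p'$2) + p'$1) - (a' * (y1$1-p'$1) - b' * (y1$2-p'$2) + p'$1)"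
      by (simp add: u1_def u2_def algebra_simps)
    then have r1: "a' * u1 - b' * u2 = w1" using f1'(1) f2'(1) by (simp add: w1_def)
    have "b' * u1 + a' * u2 = (b' * (x1$1-p'$1) + a' * (x1$2-p'$2) + p'$2) - (b' * (y1$1-p'$1) + a' * (y1$2-p'$2) + p'$2)"
      by (simp add: u1_def u2_def algebra_simps)
    then have r2: "b' * u1 + a' * u2 = w2" using f1'(2) f2'(2) by (simp add: w2_def)
    have "(a'-a) * u1 - (b'-b) * u2 = 0" using r1 rot1 by (simp add: algebra_simps)
    moreover have "(b'-b) * u1 + (a'-a) * u2 = 0" using r2 rot2 by (simp add: algebra_simps)
    ultimately have "a'-a = 0 \<and> b'-b = 0" using lin0 N0 N_def by blast
    then have aa: "a' = a" "b' = b" by auto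
    have q1: "(1-a) * p'$1 + b * p'$2 = c1" using f1'(1) unfolding aa c1_def by (simp add: algebra_simps)
    have q2: "-b * p'$1 + (1-a) * p'$2 = c2" using f1'(2) unfolding aa c2_def by (simp add: algebra_simps)
    have "(p'$1-p1) * (1-a) - (p'$2-p2) * (-b) = ((1-a) * p'$1 + b * p'$2) - ((1-a) * p1 + b * p2)"
      by (simp add: algebra_simps)
    then have "(p'$1-p1) * (1-a) - (p'$2-p2) * (-b) = 0" using q1 pe1 by simp
    moreover have "(p'$2-p2) * (1-a) + (p'$1-p1) * (-b) = (-b * p'$1 + (1-a) * p'$2) - (-b * p1 + (1-a) * p2)"
      by (simp add: algebra_simps)
    then have "(p'$2-p2) * (1-a) + (p'$1-p1) * (-b) = 0" using q2 pe2 by simp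
    ultimately have "p'$1-p1 = 0 \<and> p'$2-p2 = 0" using lin0[of "p'$1-p1" "1-a" "p'$2-p2" "-b"] D0 D_def by auto
    then have "p' = p" by (simp add: vec2_eq p12)
    then show "z = (p, M a b)" using z th' aa by simp
  qed
qed
end
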